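(* Let $\eta\in(0,1)$ and let $\mathbf{u}_T\in\mathbb{R}^{d_x}$, $\mathbf{v}_T\in\mathbb{R}^{d_y}$ be nonzero. If $\frac1{\sqrt2}\cdot\frac{\mathbf{u}^{*\top}\Sigma_{xx}\mathbf{u}_T+\mathbf{v}^{*\top}\Sigma_{yy}\mathbf{v}_T}{\sqrt{\mathbf{u}_T^\top\Sigma_{xx}\mathbf{u}_T+\mathbf{v}_T^\top\Sigma_{yy}\mathbf{v}_T}}\ge1-\frac\eta4,$ then $\mathrm{align}((\mathbf{u}_T,\mathbf{v}_T);(\mathbf{u}^*,\mathbf{v}^* ))=\frac12\Big(\frac{\mathbf{u}^{*\top}\Sigma_{xx}\mathbf{u}_T}{\sqrt{\mathbf{u}_T^\top\Sigma_{xx}\mathbf{u}_T}}+\frac{\mathbf{v}^{*\top}\Sigma_{yy}\mathbf{v}_T}{\sqrt{\mathbf{v}_T^\top\Sigma_{yy}\mathbf{v}_T}}\Big)\ge1-\eta.$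
   Context: $\Sigma_{xx}\in\mathbb{R}^{d_x\times d_x}$, $\Sigma_{yy}\in\mathbb{R}^{d_y\times d_y}$ are positive definite (population auto-covariances of zero-mean random vectors $\mathbf{x},\mathbf{y}$), $\Sigma_{xy}$ the cross-covariance, $\mathbf{T}=\Sigma_{xx}^{-1/2}\Sigma_{xy}\Sigma_{yy}^{-1/2}$ with unit top singular vector pair $(\mathbf{a}_1,\mathbf{b}_1)$, and $(\mathbf{u}^*,\mathbf{v}^* )=(\Sigma_{xx}^{-1/2}\mathbf{a}_1,\Sigma_{yy}^{-1/2}\mathbf{b}_1)$, so that $\mathbf{u}^{*\top}\Sigma_{xx}\mathbf{u}^*=\mathbf{v}^{*\top}\Sigma_{yy}\mathbf{v}^*=1$. *)

theory Defs
  imports "HOL-Analysis.Analysis"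
begin

definition pos_def_mat :: "real^'n^'n \<Rightarrow> bool" where
  "pos_def_mat M \<longleftrightarrow> transpose M = M \<and> (\<forall>x. x \<noteq> 0 \<longrightarrow> x \<bullet> (M *v x) > 0)"

definition is_inv_sqrt :: "real^'n^'n \<Rightarrow> real^'n^'n \<Rightarrow> bool" where
  "is_inv_sqrt S M \<longleftrightarrow> pos_def_mat S \<and> S ** S = matrix_inv M"

definition top_singular_pair :: "real^'m^'n \<Rightarrow> real^'n \<Rightarrow> real^'m \<Rightarrow> bool" where
  "top_singular_pair T a b \<longleftrightarrow> norm a = 1 \<and> norm b = 1 \<and>
     (\<forall>a' b'. norm a' = 1 \<longrightarrow> norm b' = 1 \<longrightarrow> a' \<bullet> (T *v b') \<le> a \<bullet> (T *v b))"

definition align :: "real^'n \<Rightarrow> real^'m \<Rightarrow> real^'n \<Rightarrow> real^'m \<Rightarrow> real^'n^'n \<Rightarrow> real^'m^'m \<Rightarrow> real" where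
  "align u v us vs Sxx Syy =
     (1/2) * ((us \<bullet> (Sxx *v u)) / sqrt (u \<bullet> (Sxx *v u))
            + (vs \<bullet> (Syy *v v)) / sqrt (v \<bullet> (Syy *v v)))"

end

theory Submission
  imports Defs
begin

lemma key_bilin:
  fixes a b R x y :: real
  assumes "0 \<le> a" "0 \<le> b" "a + b \<le> R" "a \<le> 3*R/4" "b \<le> 3*R/4"
    "0 \<le> x" "x \<le> 2" "0 \<le> y" "y \<le> 2"
  shows "a + b - x*a - y*b \<le> R - R*(x+y)/8"
proof -
  have "0 \<le> (2-x)*(2-y)" "0 \<le> x*(2-y)" "0 \<le> (2-x)*y" "0 \<le> x*y" using assms by simp_all
  then have h: "0 \<le> (2-x)*(2-y)*(R-a-b)" "0 \<le> x*(2-y)*(3*R/4 + a - b)" "0 \<le> (2-x)*y*(3*R/4 + b - a)" "0 \<le> x*y*(R/2 + a + b)"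
    using assms by (auto intro!: mult_nonneg_nonneg)
  have e: "(2-x)*(2-y)*(R-a-b) + x*(2-y)*(3*R/4 + a - b) + (2-x)*y*(3*R/4 + b - a) + x*y*(R/2 + a + b) = 4*(R - R*(x+y)/8 - (a + b - x*a - y*b))"
    by (simp add: field_simps)
  have "0 \<le> (2-x)*(2-y)*(R-a-b) + x*(2-y)*(3*R/4 + a - b) + (2-x)*y*(3*R/4 + b - a) + x*y*(R/2 + a + b)"
    using h by (intro add_nonneg_nonneg)
  then have "0 \<le> 4*(R - R*(x+y)/8 - (a + b - x*a - y*b))" by (simp only: e)
  then show ?thesis by simp
qed

lemma real_part:
  fixes A B p q eta :: real
  assumes A: "0 < A" and B: "0 < B" and pA: "p^2 \<le> A" and qB: "q^2 \<le> B"
    and e0: "0 < eta"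
    and hyp: "(1 / sqrt 2) * ((p + q) / sqrt (A + B)) \<ge> 1 - eta / 4"
  shows "(1/2) * (p / sqrt A + q / sqrt B) \<ge> 1 - eta"
proof -
  define a where "a = sqrt A"
  define b where "b = sqrt B"
  define R where "R = sqrt 2 * sqrt (A + B)"
  have a0: "0 < a" and b0: "0 < b" using A B by (simp_all add: a_def b_def)
  have R0: "0 < R" using A B by (simp add: R_def)
  have aa: "a^2 = A" and bb: "b^2 = B" using A B by (simp_all add: a_def b_def)
  have RR: "R^2 = 2*(A+B)" using A B by (simp add: R_def power_mult_distrib)
  have "0 \<le> (a-b)^2" by simp
  then have "2*a*b \<le> a^2 + b^2" by (simp add: power2_diff)
  moreover have "(a+b)^2 = a^2 + b^2 + 2*a*b" by (simp add: power2_sum)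
  ultimately have "(a+b)^2 \<le> R^2" using RR aa bb by argo
  then have ab: "a + b \<le> R" by (rule power2_le_imp_le) (use R0 in simp)
  have "(3*R/4)^2 = 9/16 * R^2" by (simp add: power_divide power_mult_distrib)
  then have R34: "(3*R/4)^2 = 9/8 * (A+B)" using RR by simp
  have "a^2 \<le> (3*R/4)^2" unfolding aa R34 using A B by (simp add: algebra_simps)
  then have a34: "a \<le> 3*R/4" by (rule power2_le_imp_le) (use R0 in simp)
  have "b^2 \<le> (3*R/4)^2" unfolding bb R34 using A B by (simp add: algebra_simps)
  then have b34: "b \<le> 3*R/4" by (rule power2_le_imp_le) (use R0 in simp)
  define s where "s = p / a"
  define t where "t = q / b"
  have ps: "p = s * a" and qt: "q = t * b" using a0 b0 by (simp_all add: s_def t_def)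
  have "sqrt (p^2) \<le> sqrt A" using pA by (rule real_sqrt_le_mono)
  then have "\<bar>p\<bar> \<le> a" by (simp add: a_def)
  then have "\<bar>p\<bar> / a \<le> 1" using a0 by (simp add: divide_le_eq_1)
  moreover have "\<bar>s\<bar> = \<bar>p\<bar> / a" unfolding s_def using a0 by (simp add: abs_divide)
  ultimately have s1: "\<bar>s\<bar> \<le> 1" by simp
  have "sqrt (q^2) \<le> sqrt B" using qB by (rule real_sqrt_le_mono)
  then have "\<bar>q\<bar> \<le> b" by (simp add: b_def)
  then have "\<bar>q\<bar> / b \<le> 1" using b0 by (simp add: divide_le_eq_1)
  moreover have "\<bar>t\<bar> = \<bar>q\<bar> / b" unfolding t_def using b0 by (simp add: abs_divide)
  ultimately have t1: "\<bar>t\<bar> \<le> 1" by simp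
  have eq: "(1 / sqrt 2) * ((p + q) / sqrt (A + B)) = (p + q) / R" by (simp add: R_def)
  have "1 - eta/4 \<le> (p+q)/R" using hyp unfolding eq .
  then have hp: "(1 - eta/4) * R \<le> p + q" using R0 by (simp add: pos_le_divide_eq)
  have key: "a + b - (1-s)*a - (1-t)*b \<le> R - R*((1-s)+(1-t))/8"
    by (rule key_bilin) (use a0 b0 ab a34 b34 s1 t1 in \<open>auto simp: abs_le_iff\<close>)
  show ?thesis
  proof (rule ccontr)
    assume "\<not> ?thesis"
    then have "s + t < 2 - 2*eta" by (simp add: s_def t_def a_def b_def)
    then have "R*((1-s)+(1-t))/8 > R*(2*eta)/8" using R0 by simp
    moreover have "p + q = a + b - (1-s)*a - (1-t)*b" using ps qt by (simp add: algebra_simps)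
    ultimately have "p + q < R - R*(2*eta)/8" using key by linarith
    moreover have "R - R*(2*eta)/8 = (1 - eta/4)*R" by (simp add: algebra_simps)
    ultimately have "p + q < (1 - eta/4)*R" by simp
    with hp show False by simp
  qed
qed

lemma sym_dot:
  fixes M :: "real^'n^'n"
  assumes "transpose M = M"
  shows "x \<bullet> (M *v y) = y \<bullet> (M *v x)"
proof -
  have "x \<bullet> (M *v y) = (x v* M) \<bullet> y" by (simp add: dot_lmul_matrix)
  also have "x v* M = M *v x" by (metis assms vector_transpose_matrix)
  finally show ?thesis by (simp add: inner_commute)
qed

lemma cs_form:
  fixes S :: "real^'n^'n"
  assumes "pos_def_mat S" and w1: "w \<bullet> (S *v w) = 1"
  shows "(w \<bullet> (S *v u))^2 \<le> u \<bullet> (S *v u)"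
proof -
  have sym: "transpose S = S" and pd: "\<And>x. x \<noteq> 0 \<Longrightarrow> x \<bullet> (S *v x) > 0"
    using assms(1) unfolding pos_def_mat_def by auto
  have nn: "0 \<le> x \<bullet> (S *v x)" for x
    using pd[of x] by (cases "x = 0") auto
  define c where "c = w \<bullet> (S *v u)"
  have c2: "u \<bullet> (S *v w) = c" unfolding c_def by (rule sym_dot[OF sym])
  define z where "z = u - c *\<^sub>R w"
  have "z \<bullet> (S *v z) = u \<bullet> (S *v u) - c * (u \<bullet> (S *v w)) - c * (w \<bullet> (S *v u)) + c * c * (w \<bullet> (S *v w))"
    unfolding z_def by (simp add: matrix_vector_mult_diff_distrib matrix_vector_mult_scaleR inner_diff_left inner_diff_right algebra_simps)
  also have "\<dots> = u \<bullet> (S *v u) - c^2" using c2 w1 unfolding c_def[symmetric] by (simp add: power2_eq_square)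
  finally show ?thesis using nn[of z] unfolding c_def by simp
qed

lemma matrix_inv_left:
  fixes S :: "real^'n^'n"
  assumes "invertible S"
  shows "matrix_inv S ** S = mat 1"
  using assms unfolding invertible_def matrix_inv_def
  by (rule someI2_ex) auto

lemma inv_sqrt_unit:
  fixes S H :: "real^'n^'n"
  assumes "pos_def_mat S" "is_inv_sqrt H S" "norm a = 1"
  shows "(H *v a) \<bullet> (S *v (H *v a)) = 1"
proof -
  have pd: "\<And>x. x \<noteq> 0 \<Longrightarrow> x \<bullet> (S *v x) > 0"
    using assms(1) unfolding pos_def_mat_def by auto
  have "\<forall>x. S *v x = 0 \<longrightarrow> x = 0" using pd by force
  then have "\<exists>B. B ** S = mat 1" by (simp add: matrix_left_invertible_ker)
  then have "invertible S" by (simp add: invertible_left_inverse)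
  then have iS: "matrix_inv S ** S = mat 1" by (rule matrix_inv_left)
  have HH: "H ** H = matrix_inv S" and Hs: "transpose H = H"
    using assms(2) unfolding is_inv_sqrt_def pos_def_mat_def by auto
  have "H ** (H ** S) = mat 1" using iS HH by (simp add: matrix_mul_assoc)
  then have HSH: "(H ** S) ** H = mat 1" by (simp add: matrix_left_right_inverse)
  have "(H *v a) \<bullet> (S *v (H *v a)) = a \<bullet> (H *v (S *v (H *v a)))"
    using sym_dot[OF Hs, of a "S *v (H *v a)"] by (simp add: inner_commute)
  also have "H *v (S *v (H *v a)) = a" using HSH by (simp add: matrix_vector_mul_assoc matrix_mul_assoc)
  also have "a \<bullet> a = 1" using assms(3) by (simp add: dot_square_norm)
  finally show ?thesis .
qed


theorem lemma9:
  fixes Sxx Hx :: "real^'n^'n" and Syy Hy :: "real^'m^'m" and Sxy :: "real^'m^'n"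
    and a1 uT :: "real^'n" and b1 vT :: "real^'m" and \<eta> :: real
  assumes "pos_def_mat Sxx" and "pos_def_mat Syy"
    and "is_inv_sqrt Hx Sxx" and "is_inv_sqrt Hy Syy"
    and "top_singular_pair (Hx ** Sxy ** Hy) a1 b1"
    and "0 < \<eta>" and "\<eta> < 1"
    and "uT \<noteq> 0" and "vT \<noteq> 0"
    and "(1 / sqrt 2) * (((Hx *v a1) \<bullet> (Sxx *v uT) + (Hy *v b1) \<bullet> (Syy *v vT))
           / sqrt (uT \<bullet> (Sxx *v uT) + vT \<bullet> (Syy *v vT))) \<ge> 1 - \<eta> / 4"
  shows "align uT vT (Hx *v a1) (Hy *v b1) Sxx Syy \<ge> 1 - \<eta>"
proof -
  have na: "norm a1 = 1" and nb: "norm b1 = 1"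
    using assms(5) unfolding top_singular_pair_def by auto
  have u1: "(Hx *v a1) \<bullet> (Sxx *v (Hx *v a1)) = 1"
    by (rule inv_sqrt_unit[OF assms(1) assms(3) na])
  have v1: "(Hy *v b1) \<bullet> (Syy *v (Hy *v b1)) = 1"
    by (rule inv_sqrt_unit[OF assms(2) assms(4) nb])
  have pA: "((Hx *v a1) \<bullet> (Sxx *v uT))^2 \<le> uT \<bullet> (Sxx *v uT)"
    by (rule cs_form[OF assms(1) u1])
  have qB: "((Hy *v b1) \<bullet> (Syy *v vT))^2 \<le> vT \<bullet> (Syy *v vT)"
    by (rule cs_form[OF assms(2) v1])
  have A0: "0 < uT \<bullet> (Sxx *v uT)"
    using assms(1,8) unfolding pos_def_mat_def by auto
  have B0: "0 < vT \<bullet> (Syy *v vT)"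
    using assms(2,9) unfolding pos_def_mat_def by auto
  show ?thesis
    unfolding align_def
    by (rule real_part[OF A0 B0 pA qB assms(6) assms(10)])
qed

end
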